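(* Let $C>0$, $a>1$, $m>0$ and $m'<ma$. Let $Y:\mathbb{R}_+\to\mathbb{R}_+$ be a $\mathcal{C}^1$ function satisfying $$\frac{d}{dt}Y+\frac{a}{1+t}Y\leq C\left(\frac{Y}{(1+t)^2}+Y^2+(1+t)^{m'-1}Y^{m+1}\right)\quad\text{on }\mathbb{R}_+.$$ Then there exists $c=c(a,m,m',C)>0$ such that if $Y(0)\leq c$, then $$Y(t)\leq 2e^{\frac{Ct}{1+t}}\frac{Y(0)}{(1+t)^a}\quad\text{for all }t\geq0.$$ *)

theory Defs
  imports "HOL-Analysis.Analysis"
begin

end

theory Submission imports Defs begin

lemma Z_deriv:
  fixes C a :: real
  assumes "t > -1" "(Y has_real_derivative y') (at t)"
  shows "((\<lambda>s. (1 + s) powr a * exp (-(C * s / (1 + s))) * Y s) has_real_derivative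
     (1 + t) powr a * exp (-(C * t / (1 + t))) * (y' + a / (1 + t) * Y t - C / (1 + t)^2 * Y t)) (at t)"
proof -
  have p: "1 + t > 0" using assms by simp
  have dg: "((\<lambda>s. 1 + s) has_real_derivative 0 + 1) (at t)"
    by (intro DERIV_add DERIV_const DERIV_ident)
  have d1: "((\<lambda>s. (1 + s) powr a) has_real_derivative a * (1 + t) powr (a - of_nat 1) * (0 + 1)) (at t)"
    using DERIV_fun_powr[OF dg] p by simp
  have dq: "((\<lambda>s. C * s / (1 + s)) has_real_derivative ((C * 1) * (1 + t) - C * t * (0 + 1)) / ((1 + t) * (1 + t))) (at t)"
    using p by (intro DERIV_divide DERIV_cmult DERIV_ident dg) auto
  have d2: "((\<lambda>s. exp (-(C * s / (1 + s)))) has_real_derivative exp (-(C * t / (1 + t))) * (- (((C * 1) * (1 + t) - C * t * (0 + 1)) / ((1 + t) * (1 + t))))) (at t)"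
    by (intro DERIV_fun_exp DERIV_minus dq)
  note d12 = DERIV_mult[OF d1 d2]
  note d = DERIV_mult[OF d12 assms(2)]
  show ?thesis
    apply (rule DERIV_cong[OF d])
    using p by (simp add: field_simps powr_diff power2_eq_square)
qed

lemma pt_bound:
  fixes C a m m' p K w s y y' :: real
  assumes "C > 0" "a > 1" "m > 0" "p \<le> a" "p \<le> m * a - m' + 1" "s > 0" "y \<ge> 0" "w > 0"
    "K = 2 * exp C"
    "(1 + s) powr a * exp (-(C * s / (1 + s))) * y \<le> 2 * w"
    "y' + a / (1 + s) * y \<le> C * (y / (1 + s)^2 + y^2 + (1 + s) powr (m' - 1) * y powr (m + 1))"
  shows "(1 + s) powr a * exp (-(C * s / (1 + s))) * (y' + a / (1 + s) * y - C / (1 + s)^2 * y)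
     \<le> C * ((K * w)^2 + (K * w) powr (m + 1)) * (1 + s) powr (-p)"
proof -
  define u where "u = 1 + s"
  define E where "E = exp (-(C * s / u))"
  have u1: "u \<ge> 1" and u0: "u > 0" using assms(6) by (auto simp: u_def)
  have E0: "E > 0" by (simp add: E_def)
  have E1: "E \<le> 1" using assms(1,6) u0 by (simp add: E_def)
  have Einv: "1 / E \<le> exp C"
  proof -
    have "1 / E = exp (C * s / u)" by (simp add: E_def exp_minus field_simps)
    also have "\<dots> \<le> exp C"
    proof -
      have "C * s / u \<le> C" using assms(1,6) u0 by (simp add: u_def field_simps)
      thus ?thesis by simp
    qed
    finally show ?thesis .
  qed
  have ua: "u powr a > 0" using u0 by simp
  have h1: "y \<le> K * w * u powr (-a)"
  proof -
    have "u powr a * E * y \<le> 2 * w" using assms(10) by (simp add: u_def E_def)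
    hence "y \<le> 2 * w * (1 / E) * (1 / u powr a)" using ua E0 by (simp add: field_simps)
    also have "\<dots> \<le> 2 * w * exp C * (1 / u powr a)"
      using Einv assms(8) ua by (intro mult_right_mono mult_left_mono) auto
    finally show ?thesis using assms(9) by (simp add: powr_minus field_simps)
  qed
  define Q where "Q = y^2 + u powr (m' - 1) * y powr (m + 1)"
  have Q0: "Q \<ge> 0" using assms(7) by (simp add: Q_def)
  have h2: "u powr a * E * (y' + a / u * y - C / u^2 * y) \<le> u powr a * E * (C * Q)"
  proof (rule mult_left_mono)
    show "y' + a / u * y - C / u^2 * y \<le> C * Q"
      using assms(11) by (simp add: u_def Q_def algebra_simps)
    show "0 \<le> u powr a * E" using E0 by simp
  qed
  have h3: "u powr a * E * (C * Q) \<le> u powr a * (C * Q)"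
    using E1 E0 ua Q0 assms(1) by (simp add: mult_left_le_one_le)
  have Kw0: "K * w * u powr (-a) \<ge> 0" using assms(8,9) by simp
  have h4: "y^2 \<le> (K * w)^2 * u powr (-2 * a)"
  proof -
    have "y^2 \<le> (K * w * u powr (-a))^2" using h1 assms(7) by (intro power_mono) auto
    also have "\<dots> = (K * w)^2 * u powr (-2 * a)"
      using u0 by (simp add: power_mult_distrib powr_powr[symmetric] powr_realpow[symmetric] power2_eq_square powr_add[symmetric])
    finally show ?thesis .
  qed
  have h5: "y powr (m + 1) \<le> (K * w) powr (m + 1) * u powr (-a * (m + 1))"
  proof -
    have "y powr (m + 1) \<le> (K * w * u powr (-a)) powr (m + 1)"
      using h1 assms(3,7) by (intro powr_mono2) auto
    also have "\<dots> = (K * w) powr (m + 1) * u powr (-a * (m + 1))"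
      using u0 assms(8,9) by (simp add: powr_mult powr_powr)
    finally show ?thesis .
  qed
  have h6: "u powr a * u powr (-2 * a) \<le> u powr (-p)"
  proof -
    have "u powr a * u powr (-2 * a) = u powr (-a)" by (simp add: powr_add[symmetric])
    also have "\<dots> \<le> u powr (-p)" using u1 assms(4) by (intro powr_mono) auto
    finally show ?thesis .
  qed
  have h7: "u powr a * u powr (m' - 1) * u powr (-a * (m + 1)) \<le> u powr (-p)"
  proof -
    have "u powr a * u powr (m' - 1) * u powr (-a * (m + 1)) = u powr (m' - 1 - a * m)"
      by (simp add: powr_add[symmetric] algebra_simps)
    also have "\<dots> \<le> u powr (-p)" using u1 assms(5) by (intro powr_mono) (auto simp: mult.commute)
    finally show ?thesis .
  qed
  have h8: "u powr a * Q \<le> ((K * w)^2 + (K * w) powr (m + 1)) * u powr (-p)"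
  proof -
    have "u powr a * Q = u powr a * y^2 + u powr a * u powr (m' - 1) * y powr (m + 1)"
      by (simp add: Q_def algebra_simps)
    also have "\<dots> \<le> u powr a * ((K * w)^2 * u powr (-2 * a))
        + u powr a * u powr (m' - 1) * ((K * w) powr (m + 1) * u powr (-a * (m + 1)))"
      using h4 h5 ua by (intro add_mono mult_left_mono) auto
    also have "\<dots> = (K * w)^2 * (u powr a * u powr (-2 * a))
        + (K * w) powr (m + 1) * (u powr a * u powr (m' - 1) * u powr (-a * (m + 1)))"
      by (simp add: algebra_simps)
    also have "\<dots> \<le> (K * w)^2 * u powr (-p) + (K * w) powr (m + 1) * u powr (-p)"
      using h6 h7 by (intro add_mono mult_left_mono) auto
    finally show ?thesis by (simp add: algebra_simps)
  qed
  have "u powr a * E * (y' + a / u * y - C / u^2 * y) \<le> C * ((K * w)^2 + (K * w) powr (m + 1)) * u powr (-p)"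
  proof -
    have "u powr a * (C * Q) = C * (u powr a * Q)" by simp
    also have "\<dots> \<le> C * (((K * w)^2 + (K * w) powr (m + 1)) * u powr (-p))"
      using h8 assms(1) by (intro mult_left_mono) auto
    finally show ?thesis using h2 h3 by (simp add: mult.assoc)
  qed
  thus ?thesis by (simp add: u_def E_def)
qed

lemma boot:
  fixes C a m m' p K w A :: real and Y Y' :: "real \<Rightarrow> real"
  assumes "C > 0" "a > 1" "m > 0" "p > 1" "p \<le> a" "p \<le> m * a - m' + 1" "w > 0"
    "K = 2 * exp C" "Y 0 \<le> w"
    "\<forall>t\<ge>0. Y t \<ge> 0" "\<forall>t\<ge>0. (Y has_real_derivative Y' t) (at t within {0..})"
    "\<forall>t\<ge>0. Y' t + a / (1 + t) * Y t
                 \<le> C * (Y t / (1 + t)^2 + (Y t)^2 + (1 + t) powr (m' - 1) * (Y t) powr (m + 1))"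
    "A = C * ((K * w)^2 + (K * w) powr (m + 1))" "A / (p - 1) \<le> w / 2"
  shows "\<forall>t\<ge>0. (1 + t) powr a * exp (-(C * t / (1 + t))) * Y t < 2 * w"
proof (intro allI impI, rule ccontr)
  fix t1 :: real
  assume t1: "t1 \<ge> 0" and nt: "\<not> (1 + t1) powr a * exp (-(C * t1 / (1 + t1))) * Y t1 < 2 * w"
  define Z where "Z = (\<lambda>s. (1 + s) powr a * exp (-(C * s / (1 + s))) * Y s)"
  define Z' where "Z' = (\<lambda>s. (1 + s) powr a * exp (-(C * s / (1 + s))) * (Y' s + a / (1 + s) * Y s - C / (1 + s)^2 * Y s))"
  define F where "F = (\<lambda>s::real. A / (p - 1) * (1 - (1 + s) powr (1 - p)))"
  have A0: "A \<ge> 0" using assms(1,7,8) by (simp add: assms(13))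
  have contY: "continuous_on {0..} Y"
    using assms(11) by (intro DERIV_continuous_on) auto
  have contZ: "continuous_on {0..} Z"
    unfolding Z_def by (intro continuous_intros contY) auto
  have derY: "(Y has_real_derivative Y' s) (at s)" if "s > 0" for s
  proof -
    have "(Y has_real_derivative Y' s) (at s within {0..})" using assms(11) that by simp
    hence "(Y has_real_derivative Y' s) (at s within {0<..})"
      by (rule DERIV_subset) auto
    moreover have "at s within {0<..} = at s" using that by (intro at_within_open) auto
    ultimately show ?thesis by simp
  qed
  have derZ: "(Z has_real_derivative Z' s) (at s)" if "s > 0" for s
  proof -
    have "s > -1" using that by simp
    from Z_deriv[OF this derY[OF that], of a C] show ?thesis by (simp only: Z_def Z'_def)
  qed
  have derF: "(F has_real_derivative A * (1 + s) powr (-p)) (at s)" if "s > 0" for s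
  proof -
    have p1: "1 + s > 0" using that by simp
    have dg: "((\<lambda>s. 1 + s) has_real_derivative 0 + 1) (at s)"
      by (intro DERIV_add DERIV_const DERIV_ident)
    have d1: "((\<lambda>s. (1 + s) powr (1 - p)) has_real_derivative (1 - p) * (1 + s) powr ((1 - p) - of_nat 1) * (0 + 1)) (at s)"
      using DERIV_fun_powr[OF dg, where r="1 - p"] p1 by simp
    have d2: "(F has_real_derivative A / (p - 1) * (0 - (1 - p) * (1 + s) powr ((1 - p) - of_nat 1) * (0 + 1))) (at s)"
      unfolding F_def by (intro DERIV_cmult DERIV_diff DERIV_const d1)
    show ?thesis
      apply (rule DERIV_cong[OF d2])
      using assms(4) by (simp add: field_simps)
  qed
  define S where "S = {s \<in> {0..t1}. 2 * w \<le> Z s}"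
  have clS: "closed S" unfolding S_def
    by (intro continuous_on_closed_Collect_le continuous_on_subset[OF contZ]) (auto intro: continuous_intros)
  have t1S: "t1 \<in> S" using t1 nt by (auto simp: S_def Z_def)
  have bS: "bdd_below S" by (auto simp: S_def bdd_below_def)
  define T where "T = Inf S"
  have TS: "T \<in> S" unfolding T_def using clS t1S bS closed_contains_Inf by blast
  hence T0: "T \<ge> 0" and Tt1: "T \<le> t1" and ZT: "2 * w \<le> Z T" by (auto simp: S_def)
  have below: "Z s < 2 * w" if "0 \<le> s" "s < T" for s
  proof (rule ccontr)
    assume "\<not> Z s < 2 * w"
    hence "s \<in> S" using that Tt1 by (auto simp: S_def)
    hence "T \<le> s" unfolding T_def using bS by (rule cInf_lower)
    thus False using that by simp
  qed
  have Z0: "Z 0 = Y 0" by (simp add: Z_def)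
  have Tpos: "T > 0"
  proof (rule ccontr)
    assume "\<not> T > 0"
    hence "T = 0" using T0 by simp
    thus False using ZT Z0 assms(7,9) by simp
  qed
  define G where "G = (\<lambda>s. Z s - F s)"
  have contG: "continuous_on {0..T} G"
    unfolding G_def F_def
    by (intro continuous_intros continuous_on_subset[OF contZ]) auto
  have derG: "(G has_real_derivative Z' s - A * (1 + s) powr (-p)) (at s)" if "s > 0" for s
    unfolding G_def using derZ[OF that] derF[OF that] by (intro derivative_intros)
  obtain l z where z: "0 < z" "z < T" and lz: "(G has_real_derivative l) (at z)" and GT: "G T - G 0 = (T - 0) * l"
  proof -
    have dG: "G differentiable (at x)" if "0 < x" "x < T" for x
      using derG[OF that(1)] real_differentiable_def by blast
    show ?thesis using MVT[OF Tpos contG dG] that by blast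
  qed
  have l: "l = Z' z - A * (1 + z) powr (-p)"
    using DERIV_unique[OF lz derG[OF z(1)]] .
  have Z'z: "Z' z \<le> A * (1 + z) powr (-p)"
  proof -
    have "Z z \<le> 2 * w" using below[of z] z by simp
    hence zb: "(1 + z) powr a * exp (-(C * z / (1 + z))) * Y z \<le> 2 * w" by (simp add: Z_def)
    have "Y z \<ge> 0" using assms(10) z by simp
    moreover have "Y' z + a / (1 + z) * Y z
         \<le> C * (Y z / (1 + z)^2 + (Y z)^2 + (1 + z) powr (m' - 1) * (Y z) powr (m + 1))"
      using assms(12) z by simp
    ultimately show ?thesis unfolding Z'_def assms(13)
      using pt_bound[OF assms(1,2,3,5,6) z(1) _ assms(7,8) zb] by blast
  qed
  have "l \<le> 0" using l Z'z by simp
  hence "T * l \<le> 0" using Tpos by (intro mult_nonneg_nonpos) auto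
  hence GT0: "G T \<le> G 0" using GT by simp
  have F0: "F 0 = 0" by (simp add: F_def)
  have "G T = Z T - F T" "G 0 = Z 0 - F 0" by (simp_all add: G_def)
  hence ZTb: "Z T \<le> Y 0 + F T" using GT0 F0 Z0 by linarith
  have FT: "F T \<le> A / (p - 1)"
  proof -
    have "(1 + T) powr (1 - p) \<ge> 0" by simp
    moreover have "A / (p - 1) \<ge> 0" using A0 assms(4) by simp
    ultimately have "A / (p - 1) * (1 + T) powr (1 - p) \<ge> 0" by (rule mult_nonneg_nonneg[rotated])
    moreover have "F T = A / (p - 1) - A / (p - 1) * (1 + T) powr (1 - p)"
      unfolding F_def by (simp add: right_diff_distrib)
    ultimately show ?thesis by linarith
  qed
  show False using ZTb FT ZT assms(9,14,7) by linarith
qed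

theorem lemmaA1:
  fixes C a m m' :: real
  assumes "C > 0" and "a > 1" and "m > 0" and "m' < m * a"
  shows "\<exists>c>0. \<forall>(Y::real \<Rightarrow> real) Y'.
           (\<forall>t\<ge>0. Y t \<ge> 0)
         \<longrightarrow> (\<forall>t\<ge>0. (Y has_real_derivative Y' t) (at t within {0..}))
         \<longrightarrow> continuous_on {0..} Y'
         \<longrightarrow> (\<forall>t\<ge>0. Y' t + a / (1 + t) * Y t
                 \<le> C * (Y t / (1 + t)^2 + (Y t)^2 + (1 + t) powr (m' - 1) * (Y t) powr (m + 1)))
         \<longrightarrow> Y 0 \<le> c
         \<longrightarrow> (\<forall>t\<ge>0. Y t \<le> 2 * exp (C * t / (1 + t)) * Y 0 / (1 + t) powr a)"
proof -
  define p where "p = min a (m * a - m' + 1)"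
  have p1: "p > 1" using assms(2,4) by (simp add: p_def mult.commute)
  have pa: "p \<le> a" and pm: "p \<le> m * a - m' + 1" by (simp_all add: p_def)
  define K where "K = 2 * exp C"
  have K0: "K > 0" by (simp add: K_def)
  define \<delta> where "\<delta> = (p - 1) / (4 * C * K)"
  have d0: "\<delta> > 0" using p1 K0 assms(1) by (simp add: \<delta>_def)
  define c where "c = min \<delta> (\<delta> powr (1 / m)) / (2 * K)"
  have c0: "c > 0" using d0 K0 by (simp add: c_def)
  have key: "C * ((K * w)^2 + (K * w) powr (m + 1)) / (p - 1) \<le> w / 2"
    if w0: "0 < w" and wc: "w \<le> 2 * c" for w
  proof -
    define v where "v = K * w"
    have v0: "v > 0" using K0 w0 by (simp add: v_def)
    have vm: "v \<le> min \<delta> (\<delta> powr (1 / m))"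
      using wc K0 by (simp add: v_def c_def field_simps)
    hence vd: "v \<le> \<delta>" and vd2: "v \<le> \<delta> powr (1 / m)" by auto
    have "v powr m \<le> (\<delta> powr (1 / m)) powr m"
      using vd2 v0 assms(3) by (intro powr_mono2) auto
    also have "\<dots> = \<delta>" using assms(3) d0 by (simp add: powr_powr)
    finally have vpm: "v powr m \<le> \<delta>" .
    have e1: "v^2 \<le> v * \<delta>" using vd v0 by (simp add: power2_eq_square)
    have "v powr (m + 1) = v * v powr m" using v0 by (simp add: powr_add)
    also have "\<dots> \<le> v * \<delta>" using vpm v0 by simp
    finally have e2: "v powr (m + 1) \<le> v * \<delta>" .
    have "C * (v^2 + v powr (m + 1)) \<le> C * (2 * (v * \<delta>))"
      using e1 e2 assms(1) by (intro mult_left_mono) auto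
    also have "\<dots> = w * (p - 1) / 2"
      using K0 assms(1) by (simp add: v_def \<delta>_def field_simps)
    finally have "C * (v^2 + v powr (m + 1)) \<le> w * (p - 1) / 2" .
    thus ?thesis using p1 by (simp add: v_def field_simps)
  qed
  show ?thesis
  proof (intro exI[of _ c] conjI allI impI c0)
    fix Y Y' :: "real \<Rightarrow> real" and t :: real
    assume Ynn: "\<forall>t\<ge>0. Y t \<ge> 0"
      and Yd: "\<forall>t\<ge>0. (Y has_real_derivative Y' t) (at t within {0..})"
      and "continuous_on {0..} Y'"
      and Yi: "\<forall>t\<ge>0. Y' t + a / (1 + t) * Y t
                 \<le> C * (Y t / (1 + t)^2 + (Y t)^2 + (1 + t) powr (m' - 1) * (Y t) powr (m + 1))"
      and Y0c: "Y 0 \<le> c" and t0: "t \<ge> 0"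
    have Y00: "Y 0 \<ge> 0" using Ynn by simp
    define Zt where "Zt = (1 + t) powr a * exp (-(C * t / (1 + t))) * Y t"
    have Zb: "Zt \<le> 2 * Y 0"
    proof (rule field_le_epsilon)
      fix e :: real assume e0: "0 < e"
      define w where "w = Y 0 + min (e / 2) c"
      have w0: "w > 0" using Y00 e0 c0 by (simp add: w_def)
      have wY: "Y 0 \<le> w" using e0 c0 by (simp add: w_def)
      have w2c: "w \<le> 2 * c" using Y0c by (simp add: w_def)
      have "\<forall>t\<ge>0. (1 + t) powr a * exp (-(C * t / (1 + t))) * Y t < 2 * w"
        using boot[OF assms(1,2,3) p1 pa pm w0 K_def wY Ynn Yd Yi refl key[OF w0 w2c]] .
      hence "Zt < 2 * w" using t0 by (simp add: Zt_def)
      thus "Zt \<le> 2 * Y 0 + e" by (simp add: w_def)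
    qed
    define x where "x = C * t / (1 + t)"
    have ta: "(1 + t) powr a > 0" using t0 by simp
    have "Y t = Zt * exp x / (1 + t) powr a"
      using ta by (simp add: Zt_def x_def exp_minus field_simps)
    also have "\<dots> \<le> 2 * Y 0 * exp x / (1 + t) powr a"
      using Zb ta by (intro divide_right_mono mult_right_mono) auto
    finally show "Y t \<le> 2 * exp (C * t / (1 + t)) * Y 0 / (1 + t) powr a"
      by (simp add: x_def mult.commute mult.left_commute)
  qed
qed

end
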